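(* Let $H$ be a graph and $q$ a positive integer. Then $H$ is cross-bipartite swapping in $K_q$ if and only if for all nonempty $A,B\subseteq V(K_q)$ with $A\subseteq B$, \[ \hom(H,K_q[A])\,\hom(H,K_q[B])\le\hom_{\mathrm b}(H\times K_2,K_q[A,B]). \]
   Context: $K_q$ is the loopless complete graph on $q$ vertices; $K_q[A]$ is the induced subgraph on $A$; $\hom$ counts homomorphisms. The tensor product $H\times K_2$ has vertex set $V(H)\times\{1,2\}$ with $(u,i)\sim(v,j)$ iff $uv\in E(H)$ and $i\ne j$. For $A,B\subseteq V(K_q)$, $\hom_{\mathrm b}(H\times K_2,K_q[A,B])$ is the number of homomorphisms $H\times K_2\to K_q$ mapping $V(H)\times\{1\}$ into $A$ and $V(H)\times\{2\}$ into $B$. $H$ is cross-bipartite swapping in $K_q$ if the displayed inequality holds for all $A,B\subseteq V(K_q)$. *)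

theory Defs
  imports Main
begin

text \<open>Graphs: a finite vertex type 'v with an edge relation E (symmetric, irreflexive).
  K_q has vertex set {..<q}; homomorphisms into K_q[A] are maps into A sending
  adjacent vertices to distinct colours.\<close>

definition hom_K :: "('v \<Rightarrow> 'v \<Rightarrow> bool) \<Rightarrow> nat set \<Rightarrow> nat" where
  "hom_K E A = card {f :: 'v \<Rightarrow> nat. (\<forall>x. f x \<in> A) \<and> (\<forall>x y. E x y \<longrightarrow> f x \<noteq> f y)}"

text \<open>Tensor product H x K_2 with vertex set V(H) x {True, False} (True = side 1, False = side 2).\<close>
definition tensorK2 :: "('v \<Rightarrow> 'v \<Rightarrow> bool) \<Rightarrow> 'v \<times> bool \<Rightarrow> 'v \<times> bool \<Rightarrow> bool" where
  "tensorK2 E x y = (E (fst x) (fst y) \<and> snd x \<noteq> snd y)"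

definition hom_b :: "('v \<Rightarrow> 'v \<Rightarrow> bool) \<Rightarrow> nat set \<Rightarrow> nat set \<Rightarrow> nat" where
  "hom_b E A B = card {g :: 'v \<times> bool \<Rightarrow> nat.
      (\<forall>v. g (v, True) \<in> A) \<and> (\<forall>v. g (v, False) \<in> B) \<and>
      (\<forall>x y. tensorK2 E x y \<longrightarrow> g x \<noteq> g y)}"

definition cross_bipartite_swapping :: "('v \<Rightarrow> 'v \<Rightarrow> bool) \<Rightarrow> nat \<Rightarrow> bool" where
  "cross_bipartite_swapping E q =
     (\<forall>A B. A \<subseteq> {..<q} \<longrightarrow> B \<subseteq> {..<q} \<longrightarrow> hom_K E A * hom_K E B \<le> hom_b E A B)"

end

theory Submission
  imports Defs
begin

lemma fin_funs:
  assumes "finite (A::'b set)"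
  shows "finite {f :: 'a::finite \<Rightarrow> 'b. \<forall>x. f x \<in> A}"
proof -
  have "finite {f :: 'a \<Rightarrow> 'b. \<forall>x. (x \<in> UNIV \<longrightarrow> f x \<in> A) \<and> (x \<notin> UNIV \<longrightarrow> f x = undefined)}"
    by (rule finite_set_of_finite_funs) (use assms in auto)
  then show ?thesis by simp
qed

lemma hom_K_mono:
  fixes E :: "'v::finite \<Rightarrow> 'v \<Rightarrow> bool"
  assumes "finite A" "finite A'" "card A \<le> card A'"
  shows "hom_K E A \<le> hom_K E A'"
proof -
  obtain h where h: "h ` A \<subseteq> A'" "inj_on h A" using card_le_inj[OF assms] by blast
  let ?S = "{f :: 'v \<Rightarrow> nat. (\<forall>x. f x \<in> A) \<and> (\<forall>x y. E x y \<longrightarrow> f x \<noteq> f y)}"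
  let ?T = "{f :: 'v \<Rightarrow> nat. (\<forall>x. f x \<in> A') \<and> (\<forall>x y. E x y \<longrightarrow> f x \<noteq> f y)}"
  have fT: "finite ?T"
    by (rule finite_subset[OF _ fin_funs[OF assms(2)]]) auto
  have "(\<lambda>f. h \<circ> f) ` ?S \<subseteq> ?T"
  proof (rule image_subsetI)
    fix f assume f: "f \<in> ?S"
    have "\<forall>x. (h \<circ> f) x \<in> A'" using f h(1) by auto
    moreover have "\<forall>x y. E x y \<longrightarrow> (h \<circ> f) x \<noteq> (h \<circ> f) y"
    proof (intro allI impI)
      fix x y assume "E x y"
      then have "f x \<noteq> f y" using f by blast
      moreover have "f x \<in> A" "f y \<in> A" using f by auto
      ultimately show "(h \<circ> f) x \<noteq> (h \<circ> f) y" using h(2) unfolding inj_on_def by auto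
    qed
    ultimately show "h \<circ> f \<in> ?T" by blast
  qed
  moreover have "inj_on (\<lambda>f. h \<circ> f) ?S"
    using h(2) by (auto simp: inj_on_def fun_eq_iff)
  ultimately have "card ?S \<le> card ?T" using card_inj_on_le fT by blast
  then show ?thesis by (simp add: hom_K_def)
qed

lemma fin_b:
  assumes "finite A" "finite B"
  shows "finite {g :: 'v::finite \<times> bool \<Rightarrow> nat.
      (\<forall>v. g (v, True) \<in> A) \<and> (\<forall>v. g (v, False) \<in> B) \<and> P g}"
proof (rule finite_subset[OF _ fin_funs[of "A \<union> B"]])
  show "{g :: 'v \<times> bool \<Rightarrow> nat. (\<forall>v. g (v, True) \<in> A) \<and> (\<forall>v. g (v, False) \<in> B) \<and> P g}
     \<subseteq> {f. \<forall>x. f x \<in> A \<union> B}"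
  proof (rule subsetI)
    fix g :: "'v \<times> bool \<Rightarrow> nat"
    assume g: "g \<in> {g. (\<forall>v. g (v, True) \<in> A) \<and> (\<forall>v. g (v, False) \<in> B) \<and> P g}"
    have "g x \<in> A \<union> B" for x
    proof -
      obtain v b where x: "x = (v, b)" by fastforce
      show ?thesis using g unfolding x by (cases b) auto
    qed
    then show "g \<in> {f. \<forall>x. f x \<in> A \<union> B}" by blast
  qed
qed (use assms in auto)

lemma hom_b_mono:
  fixes E :: "'v::finite \<Rightarrow> 'v \<Rightarrow> bool"
  assumes "finite A2" "finite B" "inj_on s A1" "s ` A1 \<subseteq> A2"
    and "\<And>a b. a \<in> A1 \<Longrightarrow> b \<in> B \<Longrightarrow> s a = b \<Longrightarrow> a = b"
  shows "hom_b E A1 B \<le> hom_b E A2 B"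
proof -
  let ?S = "{g :: 'v \<times> bool \<Rightarrow> nat.
      (\<forall>v. g (v, True) \<in> A1) \<and> (\<forall>v. g (v, False) \<in> B) \<and>
      (\<forall>x y. tensorK2 E x y \<longrightarrow> g x \<noteq> g y)}"
  let ?T = "{g :: 'v \<times> bool \<Rightarrow> nat.
      (\<forall>v. g (v, True) \<in> A2) \<and> (\<forall>v. g (v, False) \<in> B) \<and>
      (\<forall>x y. tensorK2 E x y \<longrightarrow> g x \<noteq> g y)}"
  define F where "F = (\<lambda>g :: 'v \<times> bool \<Rightarrow> nat. \<lambda>p. if snd p then s (g p) else g p)"
  have fT: "finite ?T"
    using fin_b[OF assms(1,2), where P="\<lambda>g. \<forall>x y. tensorK2 E x y \<longrightarrow> g x \<noteq> g y"] by simp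
  have "F ` ?S \<subseteq> ?T"
  proof
    fix g' assume "g' \<in> F ` ?S"
    then obtain g where g: "g \<in> ?S" and g': "g' = F g" by blast
    have gA: "\<And>v. g (v, True) \<in> A1" and gB: "\<And>v. g (v, False) \<in> B"
      and gE: "\<And>x y. tensorK2 E x y \<Longrightarrow> g x \<noteq> g y"
      using g by auto
    have 1: "\<forall>v. g' (v, True) \<in> A2"
      using gA assms(4) unfolding g' F_def by auto
    have 2: "\<forall>v. g' (v, False) \<in> B"
      using gB unfolding g' F_def by auto
    have 3: "g' x \<noteq> g' y" if t: "tensorK2 E x y" for x y
    proof -
      obtain x1 x2 y1 y2 where xy: "x = (x1, x2)" "y = (y1, y2)" by fastforce
      have ne: "g x \<noteq> g y" using gE t .
      show ?thesis
      proof (cases x2)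
        case True
        then have y2: "y2 = False" using t xy by (auto simp: tensorK2_def)
        have "g x \<in> A1" "g y \<in> B" using gA gB xy True y2 by auto
        then have "s (g x) \<noteq> g y" using ne assms(5) by blast
        then show ?thesis unfolding g' F_def using xy True y2 by simp
      next
        case False
        then have y2: "y2 = True" using t xy by (auto simp: tensorK2_def)
        have "g y \<in> A1" "g x \<in> B" using gA gB xy False y2 by auto
        then have "s (g y) \<noteq> g x" using ne assms(5) by metis
        then show ?thesis unfolding g' F_def using xy False y2 by simp
      qed
    qed
    show "g' \<in> ?T" using 1 2 3 by blast
  qed
  moreover have "inj_on F ?S"
  proof (rule inj_onI)
    fix g h assume g: "g \<in> ?S" and h: "h \<in> ?S" and eq: "F g = F h"
    show "g = h"
    proof
      fix p :: "'v \<times> bool"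
      obtain v b where p: "p = (v, b)" by fastforce
      have "F g p = F h p" using eq by simp
      then show "g p = h p"
        using g h assms(3) p by (cases b) (auto simp: F_def inj_on_def)
    qed
  qed
  ultimately have "card ?S \<le> card ?T" by (intro card_inj_on_le[OF _ _ fT])
  then show ?thesis unfolding hom_b_def .
qed

lemma hom_b_sym:
  fixes E :: "'v::finite \<Rightarrow> 'v \<Rightarrow> bool"
  assumes sym: "\<And>x y. E x y \<Longrightarrow> E y x"
  shows "hom_b E A B = hom_b E B A"
proof -
  define sw where "sw = (\<lambda>g :: 'v \<times> bool \<Rightarrow> nat. \<lambda>p. g (fst p, \<not> snd p))"
  have sw2: "sw (sw g) = g" for g by (simp add: sw_def)
  have img: "sw ` {g :: 'v \<times> bool \<Rightarrow> nat.
      (\<forall>v. g (v, True) \<in> A) \<and> (\<forall>v. g (v, False) \<in> B) \<and>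
      (\<forall>x y. tensorK2 E x y \<longrightarrow> g x \<noteq> g y)}
   \<subseteq> {g :: 'v \<times> bool \<Rightarrow> nat.
      (\<forall>v. g (v, True) \<in> B) \<and> (\<forall>v. g (v, False) \<in> A) \<and>
      (\<forall>x y. tensorK2 E x y \<longrightarrow> g x \<noteq> g y)}" for A B
  proof (rule image_subsetI)
    fix g :: "'v \<times> bool \<Rightarrow> nat"
    assume g: "g \<in> {g :: 'v \<times> bool \<Rightarrow> nat.
      (\<forall>v. g (v, True) \<in> A) \<and> (\<forall>v. g (v, False) \<in> B) \<and>
      (\<forall>x y. tensorK2 E x y \<longrightarrow> g x \<noteq> g y)}"
    have gE: "\<And>x y. tensorK2 E x y \<Longrightarrow> g x \<noteq> g y" using g by auto
    have 1: "\<forall>v. sw g (v, True) \<in> B" using g by (auto simp: sw_def)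
    have 2: "\<forall>v. sw g (v, False) \<in> A" using g by (auto simp: sw_def)
    have 3: "sw g x \<noteq> sw g y" if t: "tensorK2 E x y" for x y
    proof -
      have "tensorK2 E (fst x, \<not> snd x) (fst y, \<not> snd y)" using t by (auto simp: tensorK2_def)
      then show ?thesis using gE by (simp add: sw_def)
    qed
    show "sw g \<in> {g :: 'v \<times> bool \<Rightarrow> nat.
      (\<forall>v. g (v, True) \<in> B) \<and> (\<forall>v. g (v, False) \<in> A) \<and>
      (\<forall>x y. tensorK2 E x y \<longrightarrow> g x \<noteq> g y)}" using 1 2 3 by blast
  qed
  have "bij_betw sw {g :: 'v \<times> bool \<Rightarrow> nat.
      (\<forall>v. g (v, True) \<in> A) \<and> (\<forall>v. g (v, False) \<in> B) \<and>
      (\<forall>x y. tensorK2 E x y \<longrightarrow> g x \<noteq> g y)}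
    {g :: 'v \<times> bool \<Rightarrow> nat.
      (\<forall>v. g (v, True) \<in> B) \<and> (\<forall>v. g (v, False) \<in> A) \<and>
      (\<forall>x y. tensorK2 E x y \<longrightarrow> g x \<noteq> g y)}"
    by (rule bij_betw_byWitness[where f'=sw]) (use sw2 img in auto)
  then show ?thesis unfolding hom_b_def by (rule bij_betw_same_card)
qed

lemma hom_K_empty: "hom_K (E :: 'v \<Rightarrow> 'v \<Rightarrow> bool) {} = 0"
  by (simp add: hom_K_def)

lemma main_le:
  fixes E :: "'v::finite \<Rightarrow> 'v \<Rightarrow> bool"
  assumes H: "\<forall>A B. A \<noteq> {} \<longrightarrow> A \<subseteq> B \<longrightarrow> B \<subseteq> {..<q} \<longrightarrow>
        hom_K E A * hom_K E B \<le> hom_b E A B"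
    and A: "A \<subseteq> {..<q}" and B: "B \<subseteq> {..<q}" and c: "card A \<le> card B"
  shows "hom_K E A * hom_K E B \<le> hom_b E A B"
proof (cases "A = {}")
  case True then show ?thesis by (simp add: hom_K_empty)
next
  case False
  have fA: "finite A" and fB: "finite B" using A B finite_subset by blast+
  have eA: "A = (A \<inter> B) \<union> (A - B)" by blast
  have eB: "B = (A \<inter> B) \<union> (B - A)" by blast
  have "card ((A \<inter> B) \<union> (A - B)) = card (A \<inter> B) + card (A - B)"
    by (rule card_Un_disjoint) (use fA in auto)
  then have "card A = card (A \<inter> B) + card (A - B)" by (simp only: eA[symmetric])
  moreover have "card ((A \<inter> B) \<union> (B - A)) = card (A \<inter> B) + card (B - A)"
    by (rule card_Un_disjoint) (use fB in auto)
  then have "card B = card (A \<inter> B) + card (B - A)" by (simp only: eB[symmetric])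
  ultimately have "card (A - B) \<le> card (B - A)" using c by linarith
  then obtain D where D: "D \<subseteq> B - A" "card D = card (A - B)" "finite D"
    by (rule obtain_subset_with_card_n)
  obtain t where t: "bij_betw t D (A - B)"
    using finite_same_card_bij[OF D(3) _ D(2)] fA by blast
  define s where "s = (\<lambda>x. if x \<in> D then t x else x)"
  define A' where "A' = (A \<inter> B) \<union> D"
  have fA': "finite A'" using A'_def fA D by auto
  have dj: "(A \<inter> B) \<inter> D = {}" using D by auto
  have cA': "card A' = card A"
    using card_Un_disjoint[of "A \<inter> B" D] dj fA D \<open>card A = _\<close> A'_def by auto
  have A'B: "A' \<subseteq> B" using A'_def D by auto
  have A'ne: "A' \<noteq> {}" using cA' False fA by auto
  have tD: "t ` D = A - B" "inj_on t D" using t by (auto simp: bij_betw_def)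
  have sinj: "inj_on s A'"
  proof (rule inj_onI)
    fix x y assume x: "x \<in> A'" and y: "y \<in> A'" and e: "s x = s y"
    show "x = y"
    proof (cases "x \<in> D"; cases "y \<in> D")
      assume "x \<in> D" "y \<in> D" then show ?thesis using e tD(2) by (auto simp: s_def inj_on_def)
    next
      assume "x \<in> D" "y \<notin> D" then have "t x \<in> A - B" "y \<in> A \<inter> B" using tD y A'_def by auto
      then show ?thesis using e \<open>x \<in> D\<close> \<open>y \<notin> D\<close> by (auto simp: s_def)
    next
      assume "x \<notin> D" "y \<in> D" then have "t y \<in> A - B" "x \<in> A \<inter> B" using tD x A'_def by auto
      then show ?thesis using e \<open>x \<notin> D\<close> \<open>y \<in> D\<close> by (auto simp: s_def)
    next
      assume "x \<notin> D" "y \<notin> D" then show ?thesis using e by (simp add: s_def)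
    qed
  qed
  have simg: "s ` A' \<subseteq> A" using tD A'_def by (auto simp: s_def)
  have scond: "a = b" if "a \<in> A'" "b \<in> B" "s a = b" for a b
  proof (cases "a \<in> D")
    case True then have "s a \<in> A - B" using tD by (auto simp: s_def)
    then show ?thesis using that by auto
  next
    case False then show ?thesis using that by (simp add: s_def)
  qed
  have "hom_K E A \<le> hom_K E A'" using hom_K_mono[OF fA fA'] cA' by simp
  then have "hom_K E A * hom_K E B \<le> hom_K E A' * hom_K E B" by simp
  also have "\<dots> \<le> hom_b E A' B" using H A'ne A'B B by blast
  also have "\<dots> \<le> hom_b E A B" by (rule hom_b_mono[OF fA fB sinj simg scond])
  finally show ?thesis .
qed

theorem lemma6p1:
  fixes E :: "'v::finite \<Rightarrow> 'v \<Rightarrow> bool" and q :: nat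
  assumes "\<And>x y. E x y \<Longrightarrow> E y x" and "\<And>x. \<not> E x x" and "0 < q"
  shows "cross_bipartite_swapping E q \<longleftrightarrow>
    (\<forall>A B. A \<noteq> {} \<longrightarrow> A \<subseteq> B \<longrightarrow> B \<subseteq> {..<q} \<longrightarrow>
        hom_K E A * hom_K E B \<le> hom_b E A B)"
proof
  assume "cross_bipartite_swapping E q"
  then show "\<forall>A B. A \<noteq> {} \<longrightarrow> A \<subseteq> B \<longrightarrow> B \<subseteq> {..<q} \<longrightarrow>
        hom_K E A * hom_K E B \<le> hom_b E A B"
    unfolding cross_bipartite_swapping_def by blast
next
  assume H: "\<forall>A B. A \<noteq> {} \<longrightarrow> A \<subseteq> B \<longrightarrow> B \<subseteq> {..<q} \<longrightarrow>
        hom_K E A * hom_K E B \<le> hom_b E A B"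
  show "cross_bipartite_swapping E q"
    unfolding cross_bipartite_swapping_def
  proof (intro allI impI)
    fix A B :: "nat set" assume A: "A \<subseteq> {..<q}" and B: "B \<subseteq> {..<q}"
    show "hom_K E A * hom_K E B \<le> hom_b E A B"
    proof (cases "card A \<le> card B")
      case True then show ?thesis using main_le[OF H A B] by blast
    next
      case False
      then have "hom_K E B * hom_K E A \<le> hom_b E B A" using main_le[OF H B A] by simp
      moreover have "hom_b E A B = hom_b E B A" by (rule hom_b_sym) (use assms(1) in blast)
      ultimately show ?thesis by (simp add: mult.commute)
    qed
  qed
qed

end
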